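(* Suppose $G$ is twice differentiable and log-concave with density $g$, and there exist constants $B_1,B_2>0$ with $B_1\le g(x)\le B_2$ for all $x\in[0,1]$. Then $b^*(v,\alpha)$ is strictly increasing in $\alpha$, with $\frac{\partial b^*(v,\alpha)}{\partial\alpha}\le \frac{1}{B_1}$.
   Context: $G$ is the CDF of the highest competing bid; for a value $v\in[0,1]$, bid $b\ge0$ and credibility $\alpha\in[0,1]$, $r(v,b,\alpha)=(v-b)G(b)+\alpha\int_0^bG(y)\,dy$ and $b^*(v,\alpha)=\arg\max_b r(v,b,\alpha)$, taking the largest maximizer in case of ties. *)

theory Defs
  imports "HOL-Analysis.Analysis"
begin

definition payoff :: "(real \<Rightarrow> real) \<Rightarrow> real \<Rightarrow> real \<Rightarrow> real \<Rightarrow> real" where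
  "payoff G v b \<alpha> = (v - b) * G b + \<alpha> * integral {0..b} G"

definition bstar :: "(real \<Rightarrow> real) \<Rightarrow> real \<Rightarrow> real \<Rightarrow> real" where
  "bstar G v \<alpha> = (GREATEST b. 0 \<le> b \<and> (\<forall>b'\<ge>0. payoff G v b' \<alpha> \<le> payoff G v b \<alpha>))"

end

theory Submission
  imports Defs
begin

locale L9 =
  fixes G g :: "real \<Rightarrow> real" and B1 v :: real
  assumes G_mono: "mono G"
    and G_zero: "\<forall>x\<le>0. G x = 0"
    and G_top: "(G \<longlongrightarrow> 1) at_top"
    and G_deriv: "\<forall>x\<in>{0..1}. (G has_real_derivative g x) (at x within {0..1})"
    and g_diff: "\<forall>x\<in>{0..1}. g differentiable (at x within {0..1})"
    and G_logconcave: "concave_on {x. 0 < G x} (\<lambda>x. ln (G x))"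
    and B1_pos: "B1 > 0"
    and g_lb: "\<forall>x\<in>{0..1}. B1 \<le> g x"
    and v_pos: "0 < v" and v_lt1: "v < 1"
begin

lemma G_at: "0 < x \<Longrightarrow> x < 1 \<Longrightarrow> (G has_real_derivative g x) (at x)"
proof -
  assume x: "0 < x" "x < 1"
  have "(G has_real_derivative g x) (at x within {0..1})" using G_deriv x by auto
  moreover have "at x within {0..1} = at x" by (rule at_within_interior) (use x in auto)
  ultimately show ?thesis by simp
qed

lemma g_at: "0 < x \<Longrightarrow> x < 1 \<Longrightarrow> (g has_real_derivative deriv g x) (at x)"
proof -
  assume x: "0 < x" "x < 1"
  have "g differentiable (at x within {0..1})" using g_diff x by auto
  moreover have "at x within {0..1} = at x" by (rule at_within_interior) (use x in auto)
  ultimately show ?thesis by (simp add: DERIV_deriv_iff_real_differentiable)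
qed

lemma G_cont: "continuous_on {0..1} G"
  using G_deriv DERIV_continuous_on by blast

lemma G_strict:
  assumes xy: "0 \<le> x" "x < y" "y \<le> 1" shows "G x < G y"
proof (rule DERIV_pos_imp_increasing_open[OF \<open>x < y\<close>])
  fix z assume "x < z" "z < y"
  then have z: "0 < z" "z < 1" using xy by auto
  then have "B1 \<le> g z" using g_lb by auto
  then show "\<exists>d. (G has_real_derivative d) (at z) \<and> 0 < d"
    using G_at[OF z] B1_pos by (intro exI[of _ "g z"]) auto
next
  show "continuous_on {x..y} G" by (rule continuous_on_subset[OF G_cont]) (use xy in auto)
qed

lemma G_pos: "0 < x \<Longrightarrow> 0 < G x"
proof -
  assume x: "0 < x"
  have "G 0 < G (min x 1)" using G_strict[of 0 "min x 1"] x by auto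
  moreover have "G (min x 1) \<le> G x" using G_mono by (simp add: monoD)
  ultimately show ?thesis using G_zero by auto
qed

lemma G_le1: "G x \<le> 1"
proof (rule tendsto_lowerbound[OF G_top])
  show "\<forall>\<^sub>F y in at_top. G x \<le> G y" using G_mono
    by (metis eventually_at_top_linorder monoD)
qed simp

lemma g_pos: "0 \<le> x \<Longrightarrow> x \<le> 1 \<Longrightarrow> 0 < g x"
  using g_lb B1_pos by force

definition phi where "phi x = g x / G x"

lemma F_at: "0 < x \<Longrightarrow> x < 1 \<Longrightarrow> ((\<lambda>x. - ln (G x)) has_real_derivative - phi x) (at x)"
  unfolding phi_def
  by (auto intro!: derivative_eq_intros G_at G_pos simp: field_simps)

lemma phi_anti: "0 < x \<Longrightarrow> x < y \<Longrightarrow> y < 1 \<Longrightarrow> phi y \<le> phi x"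
proof -
  assume xy: "0 < x" "x < y" "y < 1"
  define F where "F = (\<lambda>x. - ln (G x))"
  have cv: "convex_on {0<..<1} F"
    using G_logconcave unfolding concave_on_def F_def
    by (rule convex_on_subset) (auto simp: G_pos)
  have d1: "((\<lambda>t. (F t - F x) / (t - x)) \<longlongrightarrow> - phi x) (at_right x)"
    using F_at[of x] xy unfolding F_def has_field_derivative_iff
    using tendsto_within_subset by fastforce
  have d2: "((\<lambda>t. (F t - F y) / (t - y)) \<longlongrightarrow> - phi y) (at_left y)"
    using F_at[of y] xy unfolding F_def has_field_derivative_iff
    using tendsto_within_subset by fastforce
  have "- phi x \<le> (F x - F y) / (x - y)"
  proof (rule tendsto_upperbound[OF d1])
    show "\<forall>\<^sub>F t in at_right x. (F t - F x) / (t - x) \<le> (F x - F y) / (x - y)"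
      unfolding eventually_at_right_field
    proof (intro exI[of _ y] conjI allI impI)
      fix t assume "x < t" "t < y"
      then have "(F x - F t) / (x - t) \<le> (F x - F y) / (x - y)"
        using convex_on_slope_le(1)[OF cv, of x y t] xy by auto
      then show "(F t - F x) / (t - x) \<le> (F x - F y) / (x - y)"
        by (smt (verit) minus_divide_divide)
    qed (use xy in auto)
  qed simp
  moreover have "(F x - F y) / (x - y) \<le> - phi y"
  proof (rule tendsto_lowerbound[OF d2])
    show "\<forall>\<^sub>F t in at_left y. (F x - F y) / (x - y) \<le> (F t - F y) / (t - y)"
      unfolding eventually_at_left_field
      using convex_on_slope_le(2)[OF cv, of x y] xy by (intro exI[of _ x]) auto
  qed simp
  ultimately show ?thesis by simp
qed

lemma phi_eq: "phi = (\<lambda>x. g x / G x)" by (auto simp: phi_def fun_eq_iff)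

definition phid where "phid x = (deriv g x * G x - g x * g x) / (G x)^2"

lemma phi_at: "0 < x \<Longrightarrow> x < 1 \<Longrightarrow> (phi has_real_derivative phid x) (at x)"
  unfolding phi_eq phid_def
  by (auto intro!: derivative_eq_intros G_at g_at dest: G_pos simp: field_simps power2_eq_square)

lemma phi_pos: "0 < x \<Longrightarrow> x \<le> 1 \<Longrightarrow> B1 \<le> phi x"
proof -
  assume x: "0 < x" "x \<le> 1"
  have "B1 \<le> g x" "0 < G x" "G x \<le> 1" using g_lb x G_pos G_le1 by auto
  moreover have "0 < g x" using g_pos x by auto
  ultimately have "g x * G x \<le> g x" by (simp add: mult_left_le)
  then have "g x \<le> g x / G x" using \<open>0 < G x\<close> by (simp add: le_divide_eq)
  then show ?thesis unfolding phi_def using \<open>B1 \<le> g x\<close> by linarith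
qed

lemma phid_le: "0 < x \<Longrightarrow> x < 1 \<Longrightarrow> phid x \<le> 0"
proof -
  assume x: "0 < x" "x < 1"
  have d: "((\<lambda>t. (phi t - phi x) / (t - x)) \<longlongrightarrow> phid x) (at_right x)"
    using phi_at[OF x] unfolding has_field_derivative_iff
    using tendsto_within_subset by fastforce
  show ?thesis
  proof (rule tendsto_upperbound[OF d])
    show "\<forall>\<^sub>F t in at_right x. (phi t - phi x) / (t - x) \<le> 0"
      unfolding eventually_at_right_field
    proof (intro exI[of _ 1] conjI allI impI)
      fix t assume "x < t" "t < 1"
      then have "phi t \<le> phi x" using phi_anti x by auto
      then show "(phi t - phi x) / (t - x) \<le> 0" using \<open>x < t\<close>
        by (simp add: divide_nonpos_pos)
    qed (use x in auto)
  qed simp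
qed

definition A where "A x = 1 - (v - x) * phi x"
definition Ad where "Ad x = phi x - (v - x) * phid x"

lemma A_at: "0 < x \<Longrightarrow> x < 1 \<Longrightarrow> (A has_real_derivative Ad x) (at x)"
proof -
  assume x: "0 < x" "x < 1"
  have "A = (\<lambda>x. 1 - (v - x) * phi x)" by (auto simp: A_def fun_eq_iff)
  then show ?thesis unfolding Ad_def
    by (auto intro!: derivative_eq_intros phi_at x)
qed

lemma Ad_ge: "0 < x \<Longrightarrow> x \<le> v \<Longrightarrow> B1 \<le> Ad x"
proof -
  assume x: "0 < x" "x \<le> v"
  have "phid x \<le> 0" using phid_le x v_lt1 by auto
  moreover have "B1 \<le> phi x" using phi_pos x v_lt1 by auto
  moreover have "(v - x) * phid x \<le> 0" using x \<open>phid x \<le> 0\<close> by (simp add: mult_nonneg_nonpos)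
  ultimately show ?thesis unfolding Ad_def by linarith
qed

lemma A_strict: "0 < x \<Longrightarrow> x < y \<Longrightarrow> y \<le> v \<Longrightarrow> A x < A y"
proof -
  assume xy: "0 < x" "x < y" "y \<le> v"
  have "phi y \<le> phi x" using phi_anti xy v_lt1 by auto
  moreover have "B1 \<le> phi x" "B1 \<le> phi y" using phi_pos xy v_lt1 by auto
  ultimately have "(v - y) * phi y \<le> (v - y) * phi x" using xy by (simp add: mult_left_mono)
  moreover have "(v - y) * phi x < (v - x) * phi x" using xy B1_pos \<open>B1 \<le> phi x\<close> by simp
  ultimately have "(v - y) * phi y < (v - x) * phi x" by linarith
  then show ?thesis unfolding A_def by simp
qed

lemma A_cont: "0 < a \<Longrightarrow> b < 1 \<Longrightarrow> continuous_on {a..b} A"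
  by (intro continuous_at_imp_continuous_on ballI DERIV_isCont[OF A_at]) auto

lemma A_v: "A v = 1" by (simp add: A_def)

lemma exists_b1: "\<exists>b1. 0 < b1 \<and> b1 < v \<and> A b1 < 0"
proof -
  have "(G \<longlongrightarrow> G 0) (at 0 within {0..1})"
    using G_cont unfolding continuous_on_def by auto
  then have "(G \<longlongrightarrow> 0) (at 0 within {0..1})" using G_zero by simp
  moreover have "0 < v * B1 / 2" using v_pos B1_pos by simp
  ultimately have "\<forall>\<^sub>F t in at 0 within {0..1}. G t < v * B1 / 2"
    by (metis order_tendstoD(2))
  then obtain d where d: "d > 0" "\<And>t. t \<in> {0..1} \<Longrightarrow> t \<noteq> 0 \<Longrightarrow> dist t 0 < d \<Longrightarrow> G t < v * B1 / 2"
    unfolding eventually_at by metis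
  define b1 where "b1 = min (d/2) (v/2)"
  have b1: "0 < b1" "b1 < v" "b1 < d" using d v_pos by (auto simp: b1_def)
  have Gb: "G b1 < v * B1 / 2" using d(2)[of b1] b1 v_lt1 by auto
  have Gp: "0 < G b1" using G_pos b1 by auto
  have gb: "B1 \<le> g b1" using g_lb b1 v_lt1 by auto
  have "v / 2 \<le> v - b1" using b1 by (auto simp: b1_def)
  then have "(v / 2) * B1 \<le> (v - b1) * g b1" using gb B1_pos v_pos b1
    by (intro mult_mono) auto
  then have "v * B1 / 2 \<le> (v - b1) * g b1" by simp
  then have "G b1 < (v - b1) * g b1" using Gb by simp
  then have "1 < (v - b1) * phi b1" unfolding phi_def using Gp
    by (simp add: less_divide_eq)
  then show ?thesis using b1 by (intro exI[of _ b1]) (simp add: A_def)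
qed

definition c where "c = (SOME c. 0 < c \<and> c \<le> v \<and> A c = 0)"

lemma c_prop: "0 < c" "c \<le> v" "A c = 0"
proof -
  obtain b1 where b1: "0 < b1" "b1 < v" "A b1 < 0" using exists_b1 by blast
  have "\<exists>x. b1 \<le> x \<and> x \<le> v \<and> A x = 0"
    by (rule IVT') (use b1 A_v A_cont[of b1 v] v_lt1 in auto)
  then obtain x where x: "b1 \<le> x" "x \<le> v" "A x = 0" by blast
  then have "\<exists>c. 0 < c \<and> c \<le> v \<and> A c = 0" using b1 by (intro exI[of _ x]) auto
  then have "0 < c \<and> c \<le> v \<and> A c = 0" unfolding c_def by (rule someI_ex)
  then show "0 < c" "c \<le> v" "A c = 0" by auto
qed

lemma A_img: "A ` {c..v} = {0..1}"
proof
  show "A ` {c..v} \<subseteq> {0..1}"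
  proof
    fix y assume "y \<in> A ` {c..v}"
    then obtain x where x: "x \<in> {c..v}" "y = A x" by auto
    have "A c \<le> A x" using A_strict[of c x] x c_prop by (cases "c = x") auto
    moreover have "A x \<le> A v" using A_strict[of x v] x c_prop by (cases "x = v") auto
    ultimately show "y \<in> {0..1}" using x c_prop A_v by auto
  qed
  show "{0..1} \<subseteq> A ` {c..v}"
  proof
    fix y :: real assume y: "y \<in> {0..1}"
    have "\<exists>x. c \<le> x \<and> x \<le> v \<and> A x = y"
      by (rule IVT') (use y c_prop A_v A_cont[of c v] v_lt1 in auto)
    then show "y \<in> A ` {c..v}" by force
  qed
qed

lemma pay_eq: "(\<lambda>b. payoff G v b \<alpha>) = (\<lambda>b. (v - b) * G b + \<alpha> * integral {0..b} G)"
  by (auto simp: payoff_def fun_eq_iff)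

lemma int_at: "0 < x \<Longrightarrow> x < 1 \<Longrightarrow> ((\<lambda>b. integral {0..b} G) has_real_derivative G x) (at x)"
proof -
  assume x: "0 < x" "x < 1"
  have "((\<lambda>b. integral {0..b} G) has_real_derivative G x) (at x within {0..1})"
    by (rule integral_has_real_derivative) (use G_cont x in auto)
  moreover have "at x within {0..1} = at x" by (rule at_within_interior) (use x in auto)
  ultimately show ?thesis by simp
qed

lemma pay_at: "0 < x \<Longrightarrow> x < 1 \<Longrightarrow>
  ((\<lambda>b. payoff G v b \<alpha>) has_real_derivative ((v - x) * g x - (1 - \<alpha>) * G x)) (at x)"
  unfolding pay_eq
  by (auto intro!: derivative_eq_intros G_at int_at simp: algebra_simps)

lemma pay_cont: "continuous_on {0..1} (\<lambda>b. payoff G v b \<alpha>)"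
  unfolding pay_eq
  by (intro continuous_intros G_cont indefinite_integral_continuous_1 integrable_continuous_interval)

lemma pay_sign: "0 < x \<Longrightarrow> (v - x) * g x - (1 - \<alpha>) * G x = G x * (\<alpha> - A x)"
proof -
  assume "0 < x"
  then have "G x \<noteq> 0" using G_pos by (metis less_irrefl)
  then show ?thesis unfolding A_def phi_def by (simp add: field_simps)
qed

lemma G_int: "G integrable_on {p..q}"
  by (rule integrable_on_mono_on) (use G_mono in \<open>auto simp: mono_on_def monoD\<close>)

lemma int_bound: "p \<le> q \<Longrightarrow> integral {p..q} G \<le> (q - p) * G q"
proof -
  assume pq: "p \<le> q"
  have "integral {p..q} G \<le> integral {p..q} (\<lambda>_. G q)"
    by (rule integral_le) (use G_int G_mono in \<open>auto simp: monoD\<close>)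
  then show ?thesis using pq by simp
qed

lemma int_strict: "v < b \<Longrightarrow> integral {v..b} G < (b - v) * G b"
proof -
  assume vb: "v < b"
  define m1 where "m1 = min b 1"
  define m where "m = (v + m1) / 2"
  have m: "v < m" "m < m1" "m1 \<le> 1" "m1 \<le> b" using vb v_lt1 by (auto simp: m_def m1_def)
  have "G m < G m1" using G_strict[of m m1] m v_pos by auto
  moreover have "G m1 \<le> G b" using G_mono m by (simp add: monoD)
  ultimately have Gm: "G m < G b" by simp
  have "integral {v..m} G + integral {m..b} G = integral {v..b} G"
    using Henstock_Kurzweil_Integration.integral_combine[where f=G and a=v and c=m and b=b] m G_int[of v b] G_int[of 0 b] by simp
  moreover have "integral {v..m} G \<le> (m - v) * G m" using int_bound m by auto
  moreover have "integral {m..b} G \<le> (b - m) * G b" using int_bound m by auto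
  moreover have "(m - v) * G m < (m - v) * G b" using Gm m by simp
  ultimately show ?thesis by (simp add: algebra_simps)
qed

lemma pay_beyond: "0 \<le> \<alpha> \<Longrightarrow> \<alpha> \<le> 1 \<Longrightarrow> v < b \<Longrightarrow> payoff G v b \<alpha> < payoff G v v \<alpha>"
proof -
  assume a: "0 \<le> \<alpha>" "\<alpha> \<le> 1" and vb: "v < b"
  have comb: "integral {0..v} G + integral {v..b} G = integral {0..b} G"
    using Henstock_Kurzweil_Integration.integral_combine[where f=G and a=0 and c=v and b=b] vb v_pos G_int[of v b] G_int[of 0 b] by simp
  define I where "I = integral {v..b} G"
  define X where "X = (b - v) * G b"
  have IX: "I < X" using int_strict vb unfolding I_def X_def by simp
  have "0 < G b" using G_pos vb v_pos by simp
  then have X0: "0 < X" using vb unfolding X_def by simp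
  have aIX: "\<alpha> * I \<le> \<alpha> * X" using IX a by (simp add: mult_left_mono)
  have "payoff G v b \<alpha> - payoff G v v \<alpha> = - X + \<alpha> * I"
    unfolding payoff_def X_def I_def using comb[symmetric] by (simp add: algebra_simps)
  moreover have "- X + \<alpha> * I < 0"
  proof (cases "\<alpha> = 1")
    case True then show ?thesis using IX by simp
  next
    case False
    then have "0 < (1 - \<alpha>) * X" using a X0 by simp
    then show ?thesis using aIX by (simp add: algebra_simps)
  qed
  ultimately show ?thesis by simp
qed

lemma pay_unique:
  assumes a: "0 \<le> \<alpha>" "\<alpha> \<le> 1" and b0: "c \<le> b0" "b0 \<le> v" "A b0 = \<alpha>"
    and b: "0 \<le> b" "b \<noteq> b0"
  shows "payoff G v b \<alpha> < payoff G v b0 \<alpha>"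
proof -
  have b0p: "0 < b0" using b0 c_prop by simp
  have left: "payoff G v x \<alpha> < payoff G v b0 \<alpha>" if "0 \<le> x" "x < b0" for x
  proof (rule DERIV_pos_imp_increasing_open[OF \<open>x < b0\<close>])
    fix y assume y: "x < y" "y < b0"
    have "A y < A b0" using A_strict[of y b0] y b0 that by simp
    moreover have "0 < G y" using G_pos y that by simp
    ultimately have "0 < G y * (\<alpha> - A y)" using b0 by simp
    then show "\<exists>d. ((\<lambda>b. payoff G v b \<alpha>) has_real_derivative d) (at y) \<and> 0 < d"
      using pay_at[of y \<alpha>] pay_sign[of y \<alpha>] y that b0 v_lt1 by (intro exI) auto
  next
    show "continuous_on {x..b0} (\<lambda>b. payoff G v b \<alpha>)"
      by (rule continuous_on_subset[OF pay_cont]) (use that b0 v_lt1 in auto)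
  qed
  have right: "payoff G v x \<alpha> < payoff G v b0 \<alpha>" if "b0 < x" "x \<le> v" for x
  proof (rule DERIV_neg_imp_decreasing_open[OF \<open>b0 < x\<close>])
    fix y assume y: "b0 < y" "y < x"
    have "A b0 < A y" using A_strict[of b0 y] y b0p that by simp
    moreover have "0 < G y" using G_pos y b0p by simp
    ultimately have "G y * (\<alpha> - A y) < 0" using b0 by (simp add: mult_pos_neg)
    then show "\<exists>d. ((\<lambda>b. payoff G v b \<alpha>) has_real_derivative d) (at y) \<and> d < 0"
      using pay_at[of y \<alpha>] pay_sign[of y \<alpha>] y that b0p v_lt1 by (intro exI) auto
  next
    show "continuous_on {b0..x} (\<lambda>b. payoff G v b \<alpha>)"
      by (rule continuous_on_subset[OF pay_cont]) (use that b0p v_lt1 in auto)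
  qed
  have pv: "payoff G v v \<alpha> \<le> payoff G v b0 \<alpha>"
    using right[of v] b0 by (cases "b0 = v") auto
  show ?thesis
  proof (cases "b < b0")
    case True then show ?thesis using left b by simp
  next
    case False
    then have "b0 < b" using b by simp
    then show ?thesis
    proof (cases "b \<le> v")
      case True then show ?thesis using right \<open>b0 < b\<close> by simp
    next
      case False then show ?thesis using pay_beyond[of \<alpha> b] a pv by simp
    qed
  qed
qed

lemma bstar_eq:
  assumes a: "0 \<le> \<alpha>" "\<alpha> \<le> 1" and b0: "c \<le> b0" "b0 \<le> v" "A b0 = \<alpha>"
  shows "bstar G v \<alpha> = b0"
  unfolding bstar_def
proof (rule Greatest_equality)
  have "0 < b0" using b0 c_prop by simp
  then show "0 \<le> b0 \<and> (\<forall>b'\<ge>0. payoff G v b' \<alpha> \<le> payoff G v b0 \<alpha>)"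
    using pay_unique[OF a b0] by (metis less_eq_real_def)
next
  fix y assume y: "0 \<le> y \<and> (\<forall>b'\<ge>0. payoff G v b' \<alpha> \<le> payoff G v y \<alpha>)"
  have "0 < b0" using b0 c_prop by simp
  show "y \<le> b0"
  proof (rule ccontr)
    assume "\<not> y \<le> b0"
    then have "payoff G v y \<alpha> < payoff G v b0 \<alpha>" using pay_unique[OF a b0, of y] y by simp
    moreover have "payoff G v b0 \<alpha> \<le> payoff G v y \<alpha>" using y \<open>0 < b0\<close> by simp
    ultimately show False by simp
  qed
qed

lemma h_props: "\<alpha> \<in> {0..1} \<Longrightarrow> bstar G v \<alpha> \<in> {c..v} \<and> A (bstar G v \<alpha>) = \<alpha>"
proof -
  assume a: "\<alpha> \<in> {0..1}"
  then obtain b0 where b0: "b0 \<in> {c..v}" "A b0 = \<alpha>" using A_img by (metis imageE)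
  then have "bstar G v \<alpha> = b0" using bstar_eq[of \<alpha> b0] a by auto
  then show ?thesis using b0 by simp
qed

lemma h_smono: "strict_mono_on {0..1} (bstar G v)"
proof (rule strict_mono_onI)
  fix r s :: real assume rs: "r \<in> {0..1}" "s \<in> {0..1}" "r < s"
  show "bstar G v r < bstar G v s"
  proof -
    define p where "p = bstar G v r"
    define q where "q = bstar G v s"
    have p: "c \<le> p" "p \<le> v" "A p = r" using h_props[OF rs(1)] unfolding p_def by auto
    have q: "c \<le> q" "q \<le> v" "A q = s" using h_props[OF rs(2)] unfolding q_def by auto
    have "0 < c" using c_prop by simp
    have "p < q"
    proof (rule ccontr)
      assume "\<not> p < q"
      then have "q < p \<or> q = p" by linarith
      then have "A q \<le> A p"
      proof
        assume "q < p" then show ?thesis using A_strict[of q p] q p \<open>0 < c\<close> by simp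
      qed simp
      then show False using p q rs by simp
    qed
    then show ?thesis unfolding p_def q_def .
  qed
qed

lemma h_cont: "continuous_on {0..1} (bstar G v)"
proof -
  have "continuous_on (A ` {c..v}) (bstar G v)"
  proof (rule continuous_on_inv)
    show "continuous_on {c..v} A" using A_cont c_prop v_lt1 by simp
    show "compact {c..v}" by simp
    show "\<forall>x\<in>{c..v}. bstar G v (A x) = x"
    proof
      fix x assume x: "x \<in> {c..v}"
      then have "A x \<in> {0..1}" using A_img by blast
      then show "bstar G v (A x) = x" using bstar_eq[of "A x" x] x by auto
    qed
  qed
  then show ?thesis using A_img by simp
qed

lemma h_deriv: "\<alpha> \<in> {0..1} \<Longrightarrow>
   (bstar G v has_real_derivative inverse (Ad (bstar G v \<alpha>))) (at \<alpha> within {0..1})"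
proof -
  assume a: "\<alpha> \<in> {0..1}"
  define h where "h = bstar G v"
  define a0 where "a0 = h \<alpha>"
  have a0: "a0 \<in> {c..v}" "A a0 = \<alpha>" using h_props[OF a] unfolding a0_def h_def by auto
  have a01: "0 < a0" "a0 < 1" using a0 c_prop v_lt1 by auto
  have Adpos: "B1 \<le> Ad a0" using Ad_ge a0 a01 by auto
  define Q where "Q y = (A y - A a0) / (y - a0)" for y
  have Qlim: "(Q \<longlongrightarrow> Ad a0) (at a0)"
    using A_at[OF a01] unfolding has_field_derivative_iff Q_def by simp
  have hlim: "(h \<longlongrightarrow> a0) (at \<alpha> within {0..1})"
    using h_cont a unfolding continuous_on_def h_def a0_def by auto
  have hne: "\<forall>\<^sub>F \<beta> in at \<alpha> within {0..1}. h \<beta> \<noteq> a0"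
    unfolding eventually_at_filter
  proof (intro always_eventually allI impI)
    fix \<beta> assume "\<beta> \<noteq> \<alpha>" "\<beta> \<in> {0..1}"
    then show "h \<beta> \<noteq> a0" using h_smono a unfolding a0_def h_def
      by (metis linorder_neq_iff order_less_irrefl strict_mono_onD)
  qed
  have "filterlim h (at a0) (at \<alpha> within {0..1})"
    by (rule filterlim_atI[OF hlim hne])
  then have "((\<lambda>\<beta>. Q (h \<beta>)) \<longlongrightarrow> Ad a0) (at \<alpha> within {0..1})"
    by (rule filterlim_compose[OF Qlim])
  then have lim: "((\<lambda>\<beta>. inverse (Q (h \<beta>))) \<longlongrightarrow> inverse (Ad a0)) (at \<alpha> within {0..1})"
    using Adpos B1_pos by (intro tendsto_inverse) auto
  have ev: "\<forall>\<^sub>F \<beta> in at \<alpha> within {0..1}. inverse (Q (h \<beta>)) = (h \<beta> - h \<alpha>) / (\<beta> - \<alpha>)"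
    unfolding eventually_at_filter
  proof (intro always_eventually allI impI)
    fix \<beta> assume "\<beta> \<noteq> \<alpha>" "\<beta> \<in> {0..1}"
    then have "A (h \<beta>) = \<beta>" using h_props unfolding h_def by auto
    then show "inverse (Q (h \<beta>)) = (h \<beta> - h \<alpha>) / (\<beta> - \<alpha>)"
      unfolding Q_def using a0 a0_def by simp
  qed
  have "((\<lambda>\<beta>. (h \<beta> - h \<alpha>) / (\<beta> - \<alpha>)) \<longlongrightarrow> inverse (Ad a0)) (at \<alpha> within {0..1})"
    by (rule Lim_transform_eventually[OF lim ev])
  then show ?thesis unfolding has_field_derivative_iff h_def a0_def by simp
qed

lemma main: "strict_mono_on {0..1} (bstar G v) \<and>
         (\<forall>\<alpha>\<in>{0..1}. \<exists>D. (bstar G v has_real_derivative D) (at \<alpha> within {0..1}) \<and> D \<le> 1 / B1)"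
proof (intro conjI h_smono ballI)
  fix \<alpha> :: real assume a: "\<alpha> \<in> {0..1}"
  have "B1 \<le> Ad (bstar G v \<alpha>)" using h_props[OF a] Ad_ge c_prop by auto
  then have "inverse (Ad (bstar G v \<alpha>)) \<le> 1 / B1"
    using B1_pos by (simp add: le_imp_inverse_le inverse_eq_divide[symmetric])
  then show "\<exists>D. (bstar G v has_real_derivative D) (at \<alpha> within {0..1}) \<and> D \<le> 1 / B1"
    using h_deriv[OF a] by blast
qed

end

theorem lemma9:
  fixes G g :: "real \<Rightarrow> real" and B1 B2 v :: real
  assumes G_mono: "mono G"
    and G_zero: "\<forall>x\<le>0. G x = 0"
    and G_top: "(G \<longlongrightarrow> 1) at_top"
    and G_rcont: "\<forall>x. continuous (at_right x) G"
    and G_deriv: "\<forall>x\<in>{0..1}. (G has_real_derivative g x) (at x within {0..1})"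
    and g_diff: "\<forall>x\<in>{0..1}. g differentiable (at x within {0..1})"
    and G_logconcave: "concave_on {x. 0 < G x} (\<lambda>x. ln (G x))"
    and B1_pos: "B1 > 0" and B2_pos: "B2 > 0"
    and g_bounds: "\<forall>x\<in>{0..1}. B1 \<le> g x \<and> g x \<le> B2"
    and v_range: "0 < v" "v < 1"
  shows "strict_mono_on {0..1} (bstar G v) \<and>
         (\<forall>\<alpha>\<in>{0..1}. \<exists>D. (bstar G v has_real_derivative D) (at \<alpha> within {0..1}) \<and> D \<le> 1 / B1)"
proof -
  interpret L9 G g B1 v
    by unfold_locales (use assms in auto)
  show ?thesis by (rule main)
qed

end
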